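(* Let $A$ be a finite set of options containing a default option $0$, and consider a finite nonempty collection of $V$ ballots as described in the context, with associated Llull matrix $v$. Let $C\subseteq A\setminus\{0\}$ be a set of clones. If some $x\in C$ is a path-revised approval choice of $v$, then every element of $C$ is a path-revised approval choice of $v$.
   Context: Each of the $V$ voters casts a ballot which, for each unordered pair $\{x,y\}$ of distinct options, expresses exactly one of: $x$ preferred to $y$; $y$ preferred to $x$; $x$ and $y$ ranked equally; no comparison. The Llull matrix is $v_{xy}=(\#\{\text{voters preferring }x\text{ to }y\}+\tfrac12\#\{\text{voters ranking }x,y\text{ equally}\})/V$ for distinct $x,y$. A set $C\subseteq A\setminus\{0\}$ is a set of clones if for every voter and every $y\in A\setminus C$ (including $y=0$), the relation expressed by that voter between $x$ and $y$ (one of the four possibilities above) is the same for all $x\in C$. Path scores: $v^*_{xy}=\max\min(v_{x_0x_1},\dots,v_{x_{m-1}x_m})$ over all paths $x_0\dots x_m$ ($m\ge1$, $x_0=x$, $x_m=y$, $x_i$ pairwise distinct). For $z\in A$ put $D(z)=v^*_{z0}-v^*_{0z}$ if $z\ne0$ and $D(0)=0$. An option $x$ is a path-revised approval choice if $D(x)\ge D(y)$ for all $y\in A\setminus\{x\}$. *)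

theory Defs
  imports Complex_Main
begin

text \<open>The relation a voter expresses between x and y (read: "x ... y").\<close>
datatype cmp = Above | Below | Equal | Incomp

definition ballot :: "'a set \<Rightarrow> ('a \<Rightarrow> 'a \<Rightarrow> cmp) \<Rightarrow> bool" where
  "ballot A b \<longleftrightarrow> (\<forall>x\<in>A. \<forall>y\<in>A. x \<noteq> y \<longrightarrow>
      (b x y = Above \<longleftrightarrow> b y x = Below) \<and>
      (b x y = Equal \<longleftrightarrow> b y x = Equal) \<and>
      (b x y = Incomp \<longleftrightarrow> b y x = Incomp))"

definition llull :: "'v set \<Rightarrow> ('v \<Rightarrow> 'a \<Rightarrow> 'a \<Rightarrow> cmp) \<Rightarrow> 'a \<Rightarrow> 'a \<Rightarrow> real" where
  "llull I B x y = (real (card {i\<in>I. B i x y = Above})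
                    + real (card {i\<in>I. B i x y = Equal}) / 2) / real (card I)"

text \<open>Clones (0 is the default option d).\<close>
definition clones :: "'a set \<Rightarrow> 'a \<Rightarrow> 'v set \<Rightarrow> ('v \<Rightarrow> 'a \<Rightarrow> 'a \<Rightarrow> cmp) \<Rightarrow> 'a set \<Rightarrow> bool" where
  "clones A d I B C \<longleftrightarrow> C \<subseteq> A - {d} \<and>
     (\<forall>i\<in>I. \<forall>y\<in>A - C. \<forall>x\<in>C. \<forall>x'\<in>C. B i x y = B i x' y)"

definition paths :: "'a set \<Rightarrow> 'a \<Rightarrow> 'a \<Rightarrow> 'a list set" where
  "paths A x y = {xs. set xs \<subseteq> A \<and> distinct xs \<and> length xs \<ge> 2 \<and>
                      hd xs = x \<and> last xs = y}"

definition path_strength :: "('a \<Rightarrow> 'a \<Rightarrow> real) \<Rightarrow> 'a list \<Rightarrow> real" where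
  "path_strength v xs = Min (set (map (\<lambda>(a, b). v a b) (zip xs (tl xs))))"

definition path_score :: "'a set \<Rightarrow> ('a \<Rightarrow> 'a \<Rightarrow> real) \<Rightarrow> 'a \<Rightarrow> 'a \<Rightarrow> real" where
  "path_score A v x y = Max (path_strength v ` paths A x y)"

definition Dscore :: "'a set \<Rightarrow> 'a \<Rightarrow> ('a \<Rightarrow> 'a \<Rightarrow> real) \<Rightarrow> 'a \<Rightarrow> real" where
  "Dscore A d v z = (if z = d then 0 else path_score A v z d - path_score A v d z)"

definition path_revised_approval_choice ::
    "'a set \<Rightarrow> 'a \<Rightarrow> ('a \<Rightarrow> 'a \<Rightarrow> real) \<Rightarrow> 'a \<Rightarrow> bool" where
  "path_revised_approval_choice A d v x \<longleftrightarrow>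
     x \<in> A \<and> (\<forall>y\<in>A - {x}. Dscore A d v x \<ge> Dscore A d v y)"

end

theory Submission
  imports Defs
begin

definition E :: "'a list \<Rightarrow> ('a \<times> 'a) set" where
  "E xs = set (zip xs (tl xs))"

lemma E_append: "E (xs @ ys) = E xs \<union> E ys \<union>
   (if xs \<noteq> [] \<and> ys \<noteq> [] then {(last xs, hd ys)} else {})"
  unfolding E_def
proof (induction xs)
  case Nil then show ?case by simp
next
  case (Cons a xs)
  then show ?case by (cases xs; cases ys) auto
qed

lemma E_single[simp]: "E [a] = {}" by (simp add: E_def)

lemma strength_E: "path_strength v xs = Min ((\<lambda>(a,b). v a b) ` E xs)"
  unfolding path_strength_def E_def by simp

lemma finite_E: "finite (E xs)" by (simp add: E_def)

lemma paths_finite: "finite A \<Longrightarrow> finite (paths A x y)"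
proof -
  assume fA: "finite A"
  have "paths A x y \<subseteq> {xs. set xs \<subseteq> A \<and> length xs \<le> card A}"
  proof
    fix xs assume "xs \<in> paths A x y"
    then have "set xs \<subseteq> A" "distinct xs" by (auto simp: paths_def)
    then have "length xs \<le> card A" using distinct_card[of xs] card_mono[OF fA] by metis
    then show "xs \<in> {xs. set xs \<subseteq> A \<and> length xs \<le> card A}" using \<open>set xs \<subseteq> A\<close> by simp
  qed
  moreover have "finite {xs. set xs \<subseteq> A \<and> length xs \<le> card A}"
    using finite_lists_length_le[OF fA] by simp
  ultimately show ?thesis by (rule finite_subset)
qed

lemma E_nonempty: "length xs \<ge> 2 \<Longrightarrow> E xs \<noteq> {}"
  unfolding E_def by (cases xs; cases "tl xs") auto

lemma out_dir:
  assumes "C \<subseteq> A" "d \<notin> C" "x \<in> C" "x' \<in> C"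
    and V: "\<forall>c\<in>C. \<forall>c'\<in>C. \<forall>y\<in>A - C. v c y = v c' y"
    and p: "xs \<in> paths A x d"
  shows "\<exists>ys\<in>paths A x' d. path_strength v xs \<le> path_strength v ys"
proof -
  from p have xs: "set xs \<subseteq> A" "distinct xs" "length xs \<ge> 2" "hd xs = x" "last xs = d"
    by (auto simp: paths_def)
  have "xs \<noteq> []" using xs by auto
  then have "x \<in> set xs" using xs(4) by auto
  with assms(3) have "\<exists>z\<in>set xs. z \<in> C" by blast
  from split_list_last_prop[OF this] obtain pre c suf where
    sp: "xs = pre @ c # suf" "c \<in> C" "\<forall>y\<in>set suf. y \<notin> C" by blast
  have sufne: "suf \<noteq> []"
  proof
    assume "suf = []" then have "last xs = c" using sp by simp
    then show False using xs(5) sp(2) assms(2) by simp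
  qed
  define ys where "ys = x' # suf"
  have hdA: "hd suf \<in> A - C" using sufne sp xs(1) by auto
  have "ys \<in> paths A x' d"
    proof -
    have "length suf \<ge> 1" using sufne by (cases suf) auto
    then show ?thesis unfolding paths_def ys_def using sp xs sufne assms by auto
  qed
  moreover have "path_strength v xs \<le> path_strength v ys"
  proof -
    have Eys: "E ys = E suf \<union> {(x', hd suf)}"
      using E_append[of "[x']" suf] sufne unfolding ys_def by simp
    have Exs: "E xs \<supseteq> E suf \<union> {(c, hd suf)}"
      using E_append[of pre "c # suf"] E_append[of "[c]" suf] sufne sp(1) by auto
    have "(\<lambda>(a,b). v a b) ` E ys \<subseteq> (\<lambda>(a,b). v a b) ` E xs"
    proof -
      have "v x' (hd suf) = v c (hd suf)" using V assms(4) sp(2) hdA by blast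
      then show ?thesis using Eys Exs by force
    qed
    moreover have "E ys \<noteq> {}" using Eys by auto
    ultimately show ?thesis unfolding strength_E
      by (intro Min_antimono) (auto simp: finite_E)
  qed
  ultimately show ?thesis by blast
qed

lemma in_dir:
  assumes "C \<subseteq> A" "d \<notin> C" "x \<in> C" "x' \<in> C"
    and V: "\<forall>c\<in>C. \<forall>c'\<in>C. \<forall>y\<in>A - C. v y c = v y c'"
    and p: "xs \<in> paths A d x"
  shows "\<exists>ys\<in>paths A d x'. path_strength v xs \<le> path_strength v ys"
proof -
  from p have xs: "set xs \<subseteq> A" "distinct xs" "length xs \<ge> 2" "hd xs = d" "last xs = x"
    by (auto simp: paths_def)
  have "xs \<noteq> []" using xs by auto
  then have "x \<in> set xs" using xs(5) by auto
  with assms(3) have "\<exists>z\<in>set xs. z \<in> C" by blast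
  from split_list_first_prop[OF this] obtain pre c suf where
    sp: "xs = pre @ c # suf" "c \<in> C" "\<forall>y\<in>set pre. y \<notin> C" by blast
  have prene: "pre \<noteq> []"
  proof
    assume "pre = []" then have "hd xs = c" using sp by simp
    then show False using xs(4) sp(2) assms(2) by simp
  qed
  define ys where "ys = pre @ [x']"
  have lA: "last pre \<in> A - C" using prene sp xs(1) by auto
  have "ys \<in> paths A d x'"
    proof -
    have "length pre \<ge> 1" using prene by (cases pre) auto
    then show ?thesis unfolding paths_def ys_def using sp xs prene assms by auto
  qed
  moreover have "path_strength v xs \<le> path_strength v ys"
  proof -
    have Eys: "E ys = E pre \<union> {(last pre, x')}"
      using E_append[of pre "[x']"] prene unfolding ys_def by simp
    have Exs: "E xs \<supseteq> E pre \<union> {(last pre, c)}"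
      using E_append[of pre "c # suf"] prene sp(1) by auto
    have "(\<lambda>(a,b). v a b) ` E ys \<subseteq> (\<lambda>(a,b). v a b) ` E xs"
    proof -
      have "v (last pre) x' = v (last pre) c" using V assms(4) sp(2) lA by blast
      then show ?thesis using Eys Exs by force
    qed
    moreover have "E ys \<noteq> {}" using Eys by auto
    ultimately show ?thesis unfolding strength_E
      by (intro Min_antimono) (auto simp: finite_E)
  qed
  ultimately show ?thesis by blast
qed

lemma Max_dom:
  assumes "finite T" "finite S" "S \<noteq> {}" "\<forall>s\<in>S. \<exists>t\<in>T. f s \<le> (f t::real)"
  shows "Max (f ` S) \<le> Max (f ` T)"
proof -
  have "\<forall>s\<in>S. f s \<le> Max (f ` T)"
    using assms Max_ge order_trans by (metis finite_imageI image_eqI)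
  then show ?thesis using assms by (subst Max_le_iff) auto
qed

lemma two_path: "a \<in> A \<Longrightarrow> b \<in> A \<Longrightarrow> a \<noteq> b \<Longrightarrow> [a, b] \<in> paths A a b"
  by (simp add: paths_def)

fun flip :: "cmp \<Rightarrow> cmp" where
  "flip Above = Below" | "flip Below = Above" | "flip Equal = Equal" | "flip Incomp = Incomp"

lemma ballot_flip:
  assumes "ballot A b" "x \<in> A" "y \<in> A" "x \<noteq> y"
  shows "b y x = flip (b x y)"
proof -
  have h: "(b x y = Above \<longleftrightarrow> b y x = Below) \<and> (b x y = Equal \<longleftrightarrow> b y x = Equal) \<and>
      (b x y = Incomp \<longleftrightarrow> b y x = Incomp)"
    using assms unfolding ballot_def by blast
  show ?thesis using h by (cases "b x y"; cases "b y x") simp_all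
qed

lemma llull_cong:
  assumes "\<forall>i\<in>I. B i a b = B i a' b'"
  shows "llull I B a b = llull I B a' b'"
proof -
  have "\<And>t. {i\<in>I. B i a b = t} = {i\<in>I. B i a' b' = t}" using assms by auto
  then show ?thesis unfolding llull_def by simp
qed

theorem theorem3p4:
  fixes A :: "'a set" and d :: 'a and I :: "'v set" and B :: "'v \<Rightarrow> 'a \<Rightarrow> 'a \<Rightarrow> cmp"
    and C :: "'a set" and x :: 'a
  assumes "finite A" and "d \<in> A"
    and "finite I" and "I \<noteq> {}"
    and "\<forall>i\<in>I. ballot A (B i)"
    and "clones A d I B C"
    and "x \<in> C"
    and "path_revised_approval_choice A d (llull I B) x"
  shows "\<forall>z\<in>C. path_revised_approval_choice A d (llull I B) z"
proof -
  define v where "v = llull I B"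
  have CA: "C \<subseteq> A" and dC: "d \<notin> C"
    and cl: "\<forall>i\<in>I. \<forall>y\<in>A - C. \<forall>x\<in>C. \<forall>x'\<in>C. B i x y = B i x' y"
    using assms(6) unfolding clones_def by (blast, blast, blast)
  have V1: "\<forall>c\<in>C. \<forall>c'\<in>C. \<forall>y\<in>A - C. v c y = v c' y"
  proof (intro ballI)
    fix c c' y assume "c \<in> C" "c' \<in> C" "y \<in> A - C"
    then have "\<forall>i\<in>I. B i c y = B i c' y" using cl by blast
    then show "v c y = v c' y" unfolding v_def by (rule llull_cong)
  qed
  have V2: "\<forall>c\<in>C. \<forall>c'\<in>C. \<forall>y\<in>A - C. v y c = v y c'"
  proof (intro ballI)
    fix c c' y assume a: "c \<in> C" "c' \<in> C" "y \<in> A - C"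
    have "\<forall>i\<in>I. B i y c = B i y c'"
    proof
      fix i assume i: "i \<in> I"
      have bi: "ballot A (B i)" using assms(5) i by blast
      have cA: "c \<in> A" "c' \<in> A" using a(1,2) CA by blast+
      have yA: "y \<in> A" "y \<notin> C" using a(3) by blast+
      have ne: "c \<noteq> y" "c' \<noteq> y" using a(1,2) yA(2) by blast+
      have "B i y c = flip (B i c y)" by (rule ballot_flip[OF bi cA(1) yA(1) ne(1)])
      also have "B i c y = B i c' y" using cl i a by blast
      also have "flip (B i c' y) = B i y c'" by (rule ballot_flip[OF bi cA(2) yA(1) ne(2), symmetric])
      finally show "B i y c = B i y c'" .
    qed
    then show "v y c = v y c'" unfolding v_def by (rule llull_cong)
  qed
  have fp: "finite (paths A a b)" for a b using paths_finite[OF assms(1)] .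
  have le_out: "path_score A v c d \<le> path_score A v c' d" if "c \<in> C" "c' \<in> C" for c c'
  proof -
    have "[c, d] \<in> paths A c d" using two_path[of c A d] that CA dC assms(2) by blast
    then have "paths A c d \<noteq> {}" by blast
    then show ?thesis unfolding path_score_def
      apply (rule Max_dom[OF fp fp]) using out_dir[OF CA dC that V1] by blast+
  qed
  have le_in: "path_score A v d c \<le> path_score A v d c'" if "c \<in> C" "c' \<in> C" for c c'
  proof -
    have "[d, c] \<in> paths A d c" using two_path[of d A c] that CA dC assms(2) by blast
    then have "paths A d c \<noteq> {}" by blast
    then show ?thesis unfolding path_score_def
      apply (rule Max_dom[OF fp fp]) using in_dir[OF CA dC that V2] by blast+
  qed
  have Deq: "Dscore A d v c = Dscore A d v c'" if "c \<in> C" "c' \<in> C" for c c'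
  proof -
    have "c \<noteq> d" "c' \<noteq> d" using that dC by auto
    then show ?thesis unfolding Dscore_def
      using le_out[OF that] le_out[OF that(2,1)] le_in[OF that] le_in[OF that(2,1)] by simp
  qed
  show ?thesis
  proof
    fix z assume z: "z \<in> C"
    have xc: "\<forall>y\<in>A - {x}. Dscore A d v x \<ge> Dscore A d v y"
      using assms(8) unfolding path_revised_approval_choice_def v_def by auto
    have "\<forall>y\<in>A - {z}. Dscore A d v z \<ge> Dscore A d v y"
      using xc Deq[OF z assms(7)] by (metis Diff_iff insertI1 order_refl singletonD)
    then show "path_revised_approval_choice A d (llull I B) z"
      unfolding path_revised_approval_choice_def v_def using z CA by auto
  qed
qed

end
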